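(* Let $G$ be a nilpotent group of class $c$ and of odd order, and let $n=\lceil c/2\rceil$. Then for every $x\in\gamma_n(G)$ and $g\in G$, the order of the element $x\otimes g\in G\otimes G$ divides $\exp(\gamma_n(G))$.
   Context: $\gamma_n(G)$ is the $n$-th term of the lower central series. Conventions: ${}^g h = ghg^{-1}$. The nonabelian tensor square $G\otimes G$ is generated by symbols $g\otimes h$ subject to $gg'\otimes h=({}^g g'\otimes {}^g h)(g\otimes h)$ and $g\otimes hh'=(g\otimes h)({}^h g\otimes {}^h h')$. *)

theory Defs
  imports "HOL-Algebra.Algebra"
begin

text \<open>Conjugation convention: conj g h = g h g^-1.  Commutator [a,b] = a b a^-1 b^-1.\<close>

definition conjg :: "('a, 'b) monoid_scheme \<Rightarrow> 'a \<Rightarrow> 'a \<Rightarrow> 'a" where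
  "conjg G g h = g \<otimes>\<^bsub>G\<^esub> h \<otimes>\<^bsub>G\<^esub> inv\<^bsub>G\<^esub> g"

definition commutator_subgroup :: "('a, 'b) monoid_scheme \<Rightarrow> 'a set \<Rightarrow> 'a set \<Rightarrow> 'a set" where
  "commutator_subgroup G H K =
     generate G (\<Union>h \<in> H. \<Union>k \<in> K. {h \<otimes>\<^bsub>G\<^esub> k \<otimes>\<^bsub>G\<^esub> inv\<^bsub>G\<^esub> h \<otimes>\<^bsub>G\<^esub> inv\<^bsub>G\<^esub> k})"

text \<open>Lower central series, indexed as in the paper: gamma G 1 = G, gamma G (i+1) = [gamma G i, G].
  (gamma G 0 is also set to G, as a harmless convention.)\<close>

fun lower_central :: "('a, 'b) monoid_scheme \<Rightarrow> nat \<Rightarrow> 'a set" where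
  "lower_central G 0 = carrier G"
| "lower_central G (Suc 0) = carrier G"
| "lower_central G (Suc (Suc i)) = commutator_subgroup G (lower_central G (Suc i)) (carrier G)"

definition nilpotent :: "('a, 'b) monoid_scheme \<Rightarrow> bool" where
  "nilpotent G \<longleftrightarrow> group G \<and> (\<exists>c. lower_central G (Suc c) = {\<one>\<^bsub>G\<^esub>})"

definition nilpotency_class :: "('a, 'b) monoid_scheme \<Rightarrow> nat" where
  "nilpotency_class G = (LEAST c. lower_central G (Suc c) = {\<one>\<^bsub>G\<^esub>})"

definition exponent_of :: "('a, 'b) monoid_scheme \<Rightarrow> 'a set \<Rightarrow> nat" where
  "exponent_of G H = Lcm (group.ord G ` H)"

text \<open>Words in the free group on symbols g \<otimes> h (g, h in G): a letter ((g,h),True) stands for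
  g \<otimes> h, a letter ((g,h),False) for its inverse.\<close>

type_synonym 'a tword = "(('a \<times> 'a) \<times> bool) list"

definition twords :: "('a, 'b) monoid_scheme \<Rightarrow> 'a tword set" where
  "twords G = {w. \<forall>l \<in> set w. fst l \<in> carrier G \<times> carrier G}"

text \<open>The congruence on words generated by free cancellation and the two defining relations
  gg' \<otimes> h = (gg'g^-1 \<otimes> ghg^-1)(g \<otimes> h) and g \<otimes> hh' = (g \<otimes> h)(hgh^-1 \<otimes> hh'h^-1).\<close>

inductive_set teq :: "('a, 'b) monoid_scheme \<Rightarrow> ('a tword \<times> 'a tword) set"
  for G where
    teq_refl: "w \<in> twords G \<Longrightarrow> (w, w) \<in> teq G"
  | teq_sym: "(u, v) \<in> teq G \<Longrightarrow> (v, u) \<in> teq G"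
  | teq_trans: "(u, v) \<in> teq G \<Longrightarrow> (v, w) \<in> teq G \<Longrightarrow> (u, w) \<in> teq G"
  | teq_cong: "(u, v) \<in> teq G \<Longrightarrow> a \<in> twords G \<Longrightarrow> b \<in> twords G \<Longrightarrow> (a @ u @ b, a @ v @ b) \<in> teq G"
  | teq_cancel: "g \<in> carrier G \<Longrightarrow> h \<in> carrier G \<Longrightarrow> ([((g, h), e), ((g, h), \<not> e)], []) \<in> teq G"
  | teq_rel1: "g \<in> carrier G \<Longrightarrow> g' \<in> carrier G \<Longrightarrow> h \<in> carrier G \<Longrightarrow>
      ([((g \<otimes>\<^bsub>G\<^esub> g', h), True)],
       [((conjg G g g', conjg G g h), True), ((g, h), True)]) \<in> teq G"
  | teq_rel2: "g \<in> carrier G \<Longrightarrow> h \<in> carrier G \<Longrightarrow> h' \<in> carrier G \<Longrightarrow>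
      ([((g, h \<otimes>\<^bsub>G\<^esub> h'), True)],
       [((g, h), True), ((conjg G h g, conjg G h h'), True)]) \<in> teq G"

definition tensor_square :: "('a, 'b) monoid_scheme \<Rightarrow> 'a tword set monoid" where
  "tensor_square G =
     \<lparr> carrier = twords G // teq G,
       monoid.mult = (\<lambda>A B. teq G `` {u @ v | u v. u \<in> A \<and> v \<in> B}),
       one = teq G `` {[]} \<rparr>"

definition tensor :: "('a, 'b) monoid_scheme \<Rightarrow> 'a \<Rightarrow> 'a \<Rightarrow> 'a tword set" where
  "tensor G g h = teq G `` {[((g, h), True)]}"

end

theory Submission
  imports Defs
begin


lemma conjg_closed: "group G \<Longrightarrow> g \<in> carrier G \<Longrightarrow> h \<in> carrier G \<Longrightarrow> conjg G g h \<in> carrier G"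
  by (simp add: conjg_def monoid.m_closed[OF group.is_monoid] group.inv_closed)

lemma teq_twords: assumes gr: "group G" shows "(u, v) \<in> teq G \<Longrightarrow> u \<in> twords G \<and> v \<in> twords G"
  by (induction rule: teq.induct) (use gr in \<open>auto simp: twords_def conjg_closed monoid.m_closed[OF group.is_monoid]\<close>)

lemma twords_append[simp]: "u @ v \<in> twords G \<longleftrightarrow> u \<in> twords G \<and> v \<in> twords G"
  by (auto simp: twords_def)

lemma twords_Nil[simp]: "[] \<in> twords G" by (simp add: twords_def)

lemma teq_equiv: assumes gr: "group G" shows "equiv (twords G) (teq G)"
  unfolding equiv_def refl_on_def sym_def trans_def
  by (auto dest: teq_twords[OF gr] intro: teq_refl teq_sym teq_trans)

lemma teq_app: "group G \<Longrightarrow> (u, u') \<in> teq G \<Longrightarrow> (v, v') \<in> teq G \<Longrightarrow> (u @ v, u' @ v') \<in> teq G"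
proof -
  assume gr: "group G" and a: "(u, u') \<in> teq G" "(v, v') \<in> teq G"
  have 1: "(u @ v, u' @ v) \<in> teq G" using teq_cong[OF a(1), of "[]" v] a teq_twords[OF gr] by auto
  have 2: "(u' @ v, u' @ v') \<in> teq G" using teq_cong[OF a(2), of u' "[]"] a teq_twords[OF gr] by auto
  show ?thesis using teq_trans[OF 1 2] .
qed

lemma tmult_class: assumes gr: "group G" and uv: "u \<in> twords G" "v \<in> twords G" shows
   "monoid.mult (tensor_square G) (teq G `` {u}) (teq G `` {v}) = teq G `` {u @ v}"
proof -
  let ?S = "{u' @ v' |u' v'. u' \<in> teq G `` {u} \<and> v' \<in> teq G `` {v}}"
  have 1: "teq G `` {s} = teq G `` {u @ v}" if "s \<in> ?S" for s
  proof -
    from that obtain u' v' where "s = u' @ v'" "(u, u') \<in> teq G" "(v, v') \<in> teq G" by auto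
    then have "(u @ v, s) \<in> teq G" using teq_app[OF gr] by blast
    then show ?thesis using equiv_class_eq[OF teq_equiv[OF gr]] by blast
  qed
  have 2: "u @ v \<in> ?S" using uv teq_refl by blast
  have "teq G `` ?S = (\<Union>s\<in>?S. teq G `` {s})" by blast
  also have "\<dots> = teq G `` {u @ v}" using 1 2 by blast
  finally show ?thesis by (simp add: tensor_square_def)
qed

definition winv :: "'a tword \<Rightarrow> 'a tword" where
  "winv w = rev (map (\<lambda>(p, e). (p, \<not> e)) w)"

lemma winv_twords: "w \<in> twords G \<Longrightarrow> winv w \<in> twords G"
  by (auto simp: twords_def winv_def)

lemma winv_cancel: "w \<in> twords G \<Longrightarrow> (w @ winv w, []) \<in> teq G"
proof (induction w)
  case Nil
  then show ?case by (simp add: winv_def teq_refl)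
next
  case (Cons a w)
  obtain g h e where a: "a = ((g, h), e)" by (metis prod.collapse)
  have gh: "g \<in> carrier G" "h \<in> carrier G" "w \<in> twords G"
    using Cons.prems a by (auto simp: twords_def)
  have "(a # w @ winv w @ [((g,h), \<not> e)], [a] @ [] @ [((g,h), \<not> e)]) \<in> teq G"
    using teq_cong[OF Cons.IH[OF gh(3)], of "[a]" "[((g,h), \<not> e)]"] gh a
    by (auto simp: twords_def)
  moreover have "([a] @ [] @ [((g,h), \<not> e)], []) \<in> teq G"
    using teq_cancel[OF gh(1,2), of e] a by simp
  ultimately show ?case
    using teq_trans by (fastforce simp: winv_def a)
qed

lemma winv_winv: "winv (winv w) = w"
  by (induction w) (auto simp: winv_def)

lemma tensor_square_group: assumes gr: "group G" shows "group (tensor_square G)"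
proof (rule groupI)
  let ?T = "tensor_square G"
  have cT: "carrier ?T = twords G // teq G" by (simp add: tensor_square_def)
  show "x \<otimes>\<^bsub>?T\<^esub> y \<in> carrier ?T" if "x \<in> carrier ?T" "y \<in> carrier ?T" for x y
    using that unfolding cT
    by (auto elim!: quotientE simp: tmult_class[OF gr] intro!: quotientI)
  show "\<one>\<^bsub>?T\<^esub> \<in> carrier ?T" unfolding cT by (auto simp: tensor_square_def intro!: quotientI)
  show "(x \<otimes>\<^bsub>?T\<^esub> y) \<otimes>\<^bsub>?T\<^esub> z = x \<otimes>\<^bsub>?T\<^esub> (y \<otimes>\<^bsub>?T\<^esub> z)"
    if "x \<in> carrier ?T" "y \<in> carrier ?T" "z \<in> carrier ?T" for x y z
    using that unfolding cT
    by (auto elim!: quotientE simp: tmult_class[OF gr])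
  show "\<one>\<^bsub>?T\<^esub> \<otimes>\<^bsub>?T\<^esub> x = x" if "x \<in> carrier ?T" for x
  proof -
    from that obtain w where w: "w \<in> twords G" "x = teq G `` {w}" unfolding cT by (auto elim!: quotientE)
    have "\<one>\<^bsub>?T\<^esub> = teq G `` {[]}" by (simp add: tensor_square_def)
    then show ?thesis using tmult_class[OF gr, of "[]" w] w by simp
  qed
  show "\<exists>y\<in>carrier ?T. y \<otimes>\<^bsub>?T\<^esub> x = \<one>\<^bsub>?T\<^esub>" if "x \<in> carrier ?T" for x
  proof -
    from that obtain w where w: "w \<in> twords G" "x = teq G `` {w}" unfolding cT by (auto elim!: quotientE)
    have "(winv w @ w, []) \<in> teq G" using winv_cancel[OF winv_twords[OF w(1)]] by (simp add: winv_winv)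
    then have "teq G `` {winv w @ w} = teq G `` {[]}"
      using equiv_class_eq[OF teq_equiv[OF gr]] by blast
    moreover have "\<one>\<^bsub>?T\<^esub> = teq G `` {[]}" by (simp add: tensor_square_def)
    ultimately show ?thesis using w winv_twords[OF w(1)] tmult_class[OF gr, of "winv w" w]
      by (intro bexI[of _ "teq G `` {winv w}"]) (auto simp: cT intro!: quotientI)
  qed
qed




context group begin

lemma lc1 [simp]: "x \<in> carrier G \<Longrightarrow> y \<in> carrier G \<Longrightarrow> x \<otimes> (inv x \<otimes> y) = y"
  by (simp add: m_assoc[symmetric])
lemma lc2 [simp]: "x \<in> carrier G \<Longrightarrow> y \<in> carrier G \<Longrightarrow> inv x \<otimes> (x \<otimes> y) = y"
  by (simp add: m_assoc[symmetric])
lemma lcancel: "x \<in> carrier G \<Longrightarrow> y \<in> carrier G \<Longrightarrow> z \<in> carrier G \<Longrightarrow> x \<otimes> y = x \<otimes> z \<longleftrightarrow> y = z"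
  by (metis lc2)

lemma conjg_closed' [simp]: "g \<in> carrier G \<Longrightarrow> h \<in> carrier G \<Longrightarrow> conjg G g h \<in> carrier G"
  by (simp add: conjg_def)

lemma conjg_mult_l: "g \<in> carrier G \<Longrightarrow> h \<in> carrier G \<Longrightarrow> x \<in> carrier G \<Longrightarrow>
   conjg G (g \<otimes> h) x = conjg G g (conjg G h x)"
  by (simp add: conjg_def m_assoc inv_mult_group)

lemma conjg_mult_r: "g \<in> carrier G \<Longrightarrow> a \<in> carrier G \<Longrightarrow> b \<in> carrier G \<Longrightarrow>
   conjg G g (a \<otimes> b) = conjg G g a \<otimes> conjg G g b"
  by (simp add: conjg_def m_assoc)

lemma conjg_one [simp]: "x \<in> carrier G \<Longrightarrow> conjg G \<one> x = x"
  by (simp add: conjg_def)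

lemma conjg_comm: "g \<in> carrier G \<Longrightarrow> x \<in> carrier G \<Longrightarrow> g \<otimes> x = x \<otimes> g \<Longrightarrow> conjg G g x = x"
  by (simp add: conjg_def m_assoc)

end

locale tpair = G: group G + T: group T
  for G :: "('a, 'b) monoid_scheme" (structure) and T :: "('c, 'd) monoid_scheme" +
  fixes t :: "'a \<Rightarrow> 'a \<Rightarrow> 'c"
  assumes t_closed [simp]: "a \<in> carrier G \<Longrightarrow> b \<in> carrier G \<Longrightarrow> t a b \<in> carrier T"
  and R1: "g \<in> carrier G \<Longrightarrow> g' \<in> carrier G \<Longrightarrow> h \<in> carrier G \<Longrightarrow>
      t (g \<otimes> g') h = t (conjg G g g') (conjg G g h) \<otimes>\<^bsub>T\<^esub> t g h"
  and R2: "g \<in> carrier G \<Longrightarrow> h \<in> carrier G \<Longrightarrow> h' \<in> carrier G \<Longrightarrow>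
      t g (h \<otimes> h') = t g h \<otimes>\<^bsub>T\<^esub> t (conjg G h g) (conjg G h h')"
begin

lemma D:
  assumes g: "g \<in> carrier G" and h: "h \<in> carrier G" and p: "p \<in> carrier G" and q: "q \<in> carrier G"
  shows "t (conjg G (g \<otimes> h \<otimes> inv g \<otimes> inv h) p) (conjg G (g \<otimes> h \<otimes> inv g \<otimes> inv h) q) \<otimes>\<^bsub>T\<^esub> t g h
       = t g h \<otimes>\<^bsub>T\<^esub> t p q"
proof -
  define r where "r = inv (h \<otimes> g)"
  have r: "r \<in> carrier G" by (simp add: r_def g h)
  define g' where "g' = conjg G r p"
  define h' where "h' = conjg G r q"
  have g': "g' \<in> carrier G" and h': "h' \<in> carrier G" by (simp_all add: g'_def h'_def r p q)
  note cl = g h g' h' r p q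
  let ?A = "t (conjg G g g') (conjg G g h)"
  let ?B = "t (conjg G (g \<otimes> h) g') (conjg G (g \<otimes> h) h')"
  let ?C = "t g h"
  let ?D = "t (conjg G h g) (conjg G h h')"
  let ?E = "t (conjg G (h \<otimes> g) g') (conjg G (h \<otimes> g) h')"
  have e1: "t (g \<otimes> g') (h \<otimes> h') = ?A \<otimes>\<^bsub>T\<^esub> ?B \<otimes>\<^bsub>T\<^esub> ?C \<otimes>\<^bsub>T\<^esub> ?D"
  proof -
    have "t (g \<otimes> g') (h \<otimes> h') = t (conjg G g g') (conjg G g h \<otimes> conjg G g h') \<otimes>\<^bsub>T\<^esub> t g (h \<otimes> h')"
      using R1[of g g' "h \<otimes> h'"] cl by (simp add: G.conjg_mult_r)
    also have "t (conjg G g g') (conjg G g h \<otimes> conjg G g h') = ?A \<otimes>\<^bsub>T\<^esub> t (conjg G (conjg G g h) (conjg G g g')) (conjg G (conjg G g h) (conjg G g h'))"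
      using R2 cl by simp
    also have "conjg G (conjg G g h) (conjg G g g') = conjg G (g \<otimes> h) g'"
      using cl by (simp add: conjg_def G.m_assoc G.inv_mult_group)
    also have "conjg G (conjg G g h) (conjg G g h') = conjg G (g \<otimes> h) h'"
      using cl by (simp add: conjg_def G.m_assoc G.inv_mult_group)
    also have "t g (h \<otimes> h') = ?C \<otimes>\<^bsub>T\<^esub> ?D" using R2 cl by simp
    finally show ?thesis using cl by (simp add: T.m_assoc)
  qed
  have e2: "t (g \<otimes> g') (h \<otimes> h') = ?A \<otimes>\<^bsub>T\<^esub> ?C \<otimes>\<^bsub>T\<^esub> ?E \<otimes>\<^bsub>T\<^esub> ?D"
  proof -
    have "t (g \<otimes> g') (h \<otimes> h') = t (g \<otimes> g') h \<otimes>\<^bsub>T\<^esub> t (conjg G h g \<otimes> conjg G h g') (conjg G h h')"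
      using R2[of "g \<otimes> g'" h h'] cl by (simp add: G.conjg_mult_r)
    also have "t (g \<otimes> g') h = ?A \<otimes>\<^bsub>T\<^esub> ?C" using R1 cl by simp
    also have "t (conjg G h g \<otimes> conjg G h g') (conjg G h h') = t (conjg G (conjg G h g) (conjg G h g')) (conjg G (conjg G h g) (conjg G h h')) \<otimes>\<^bsub>T\<^esub> ?D"
      using R1 cl by simp
    also have "conjg G (conjg G h g) (conjg G h g') = conjg G (h \<otimes> g) g'"
      using cl by (simp add: conjg_def G.m_assoc G.inv_mult_group)
    also have "conjg G (conjg G h g) (conjg G h h') = conjg G (h \<otimes> g) h'"
      using cl by (simp add: conjg_def G.m_assoc G.inv_mult_group)
    finally show ?thesis using cl by (simp add: T.m_assoc)
  qed
  have "?A \<otimes>\<^bsub>T\<^esub> (?B \<otimes>\<^bsub>T\<^esub> ?C) \<otimes>\<^bsub>T\<^esub> ?D = ?A \<otimes>\<^bsub>T\<^esub> (?C \<otimes>\<^bsub>T\<^esub> ?E) \<otimes>\<^bsub>T\<^esub> ?D"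
    using e1 e2 cl by (simp add: T.m_assoc)
  then have BC: "?B \<otimes>\<^bsub>T\<^esub> ?C = ?C \<otimes>\<^bsub>T\<^esub> ?E"
    using cl by (simp add: T.lcancel)
  have "conjg G (h \<otimes> g) g' = p" "conjg G (h \<otimes> g) h' = q"
    using cl by (simp_all add: g'_def h'_def r_def conjg_def G.m_assoc G.inv_mult_group)
  moreover have "conjg G (g \<otimes> h) g' = conjg G (g \<otimes> h \<otimes> inv g \<otimes> inv h) p"
    "conjg G (g \<otimes> h) h' = conjg G (g \<otimes> h \<otimes> inv g \<otimes> inv h) q"
    using cl by (simp_all add: g'_def h'_def r_def conjg_def G.m_assoc G.inv_mult_group)
  ultimately show ?thesis using BC by simp
qed

lemma Dcomm:
  assumes g: "g \<in> carrier G" and h: "h \<in> carrier G" and p: "p \<in> carrier G" and q: "q \<in> carrier G"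
    and c: "g \<otimes> h = h \<otimes> g"
  shows "t p q \<otimes>\<^bsub>T\<^esub> t g h = t g h \<otimes>\<^bsub>T\<^esub> t p q"
proof -
  have "g \<otimes> h \<otimes> inv g \<otimes> inv h = \<one>" using c g h by (simp add: G.m_assoc)
  then show ?thesis using D[OF g h p q] p q by simp
qed

lemma t_one: "h \<in> carrier G \<Longrightarrow> t \<one> h = \<one>\<^bsub>T\<^esub>"
  using R1[of \<one> \<one> h] by (simp add: conjg_def)

lemma main_T:
  assumes x: "x \<in> carrier G" and g: "g \<in> carrier G"
    and kx: "x \<otimes> (x \<otimes> g \<otimes> inv x \<otimes> inv g) = (x \<otimes> g \<otimes> inv x \<otimes> inv g) \<otimes> x"
    and xm: "x [^] (m::nat) = \<one>" and m: "odd m"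
  shows "t x g [^]\<^bsub>T\<^esub> m = \<one>\<^bsub>T\<^esub>"
proof -
  define k where "k = x \<otimes> g \<otimes> inv x \<otimes> inv g"
  have k: "k \<in> carrier G" by (simp add: k_def x g)
  have kx': "x \<otimes> k = k \<otimes> x" using kx k_def by simp
  define z where "z = t x k"
  define y where "y = t x g"
  have z: "z \<in> carrier T" and y: "y \<in> carrier T" by (simp_all add: z_def y_def x g k)
  have zt: "t p q \<otimes>\<^bsub>T\<^esub> z = z \<otimes>\<^bsub>T\<^esub> t p q" if "p \<in> carrier G" "q \<in> carrier G" for p q
    using Dcomm[OF x k that kx'] z_def by simp
  have zy: "y \<otimes>\<^bsub>T\<^esub> z = z \<otimes>\<^bsub>T\<^esub> y" using zt[OF x g] y_def by simp
  have xpow: "x \<otimes> x [^] i = x [^] i \<otimes> x" for i :: nat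
    using x by (metis G.nat_pow_Suc G.nat_pow_Suc2)
  have cx: "conjg G x (x [^] i) = x [^] i" for i :: nat
    using x by (simp add: G.conjg_comm xpow)
  have S1: "t (x [^] i) k = z [^]\<^bsub>T\<^esub> i" for i :: nat
  proof (induction i)
    case 0 then show ?case using t_one[OF k] by simp
  next
    case (Suc i)
    have "t (x [^] Suc i) k = t (x \<otimes> x [^] i) k" using x by (simp only: G.nat_pow_Suc2[OF x])
    also have "\<dots> = t (x [^] i) k \<otimes>\<^bsub>T\<^esub> z"
      using R1[of x "x [^] i" k] x k cx G.conjg_comm[OF x k kx'] z_def by simp
    finally show ?case using Suc by simp
  qed
  have S2: "t (x [^] Suc i) g = z [^]\<^bsub>T\<^esub> i \<otimes>\<^bsub>T\<^esub> y \<otimes>\<^bsub>T\<^esub> t (x [^] i) g" for i :: nat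
  proof -
    have "t (x [^] Suc i) g = t (x \<otimes> x [^] i) g" using x by (simp only: G.nat_pow_Suc2[OF x])
    also have "\<dots> = t (x [^] i) (conjg G x g) \<otimes>\<^bsub>T\<^esub> y"
      using R1[of x "x [^] i" g] x g cx y_def by simp
    also have "conjg G x g = k \<otimes> g" using x g by (simp add: k_def conjg_def G.m_assoc)
    also have "t (x [^] i) (k \<otimes> g) = z [^]\<^bsub>T\<^esub> i \<otimes>\<^bsub>T\<^esub> t (conjg G k (x [^] i)) (conjg G k g)"
      using R2[of "x [^] i" k g] x k g S1 by simp
    finally have e: "t (x [^] Suc i) g = z [^]\<^bsub>T\<^esub> i \<otimes>\<^bsub>T\<^esub> t (conjg G k (x [^] i)) (conjg G k g) \<otimes>\<^bsub>T\<^esub> y" .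
    have "t (conjg G k (x [^] i)) (conjg G k g) \<otimes>\<^bsub>T\<^esub> y = y \<otimes>\<^bsub>T\<^esub> t (x [^] i) g"
      using D[OF x g _ g, of "x [^] i"] x k_def y_def by simp
    then show ?thesis using e x g z y k by (simp add: T.m_assoc)
  qed
  have S3: "t (x [^] i) g = z [^]\<^bsub>T\<^esub> (\<Sum>j<i. j) \<otimes>\<^bsub>T\<^esub> y [^]\<^bsub>T\<^esub> i" for i :: nat
  proof (induction i)
    case 0 then show ?case using t_one[OF g] by simp
  next
    case (Suc i)
    have yc: "y \<otimes>\<^bsub>T\<^esub> z [^]\<^bsub>T\<^esub> n = z [^]\<^bsub>T\<^esub> n \<otimes>\<^bsub>T\<^esub> y" for n :: nat
      using T.group_commutes_pow[OF zy[symmetric] z y] by simp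
    have "t (x [^] Suc i) g = z [^]\<^bsub>T\<^esub> i \<otimes>\<^bsub>T\<^esub> y \<otimes>\<^bsub>T\<^esub> (z [^]\<^bsub>T\<^esub> (\<Sum>j<i. j) \<otimes>\<^bsub>T\<^esub> y [^]\<^bsub>T\<^esub> i)"
      using S2 Suc by simp
    also have "\<dots> = z [^]\<^bsub>T\<^esub> i \<otimes>\<^bsub>T\<^esub> z [^]\<^bsub>T\<^esub> (\<Sum>j<i. j) \<otimes>\<^bsub>T\<^esub> (y \<otimes>\<^bsub>T\<^esub> y [^]\<^bsub>T\<^esub> i)"
    proof -
      have "y \<otimes>\<^bsub>T\<^esub> (z [^]\<^bsub>T\<^esub> (\<Sum>j<i. j) \<otimes>\<^bsub>T\<^esub> y [^]\<^bsub>T\<^esub> i) = z [^]\<^bsub>T\<^esub> (\<Sum>j<i. j) \<otimes>\<^bsub>T\<^esub> (y \<otimes>\<^bsub>T\<^esub> y [^]\<^bsub>T\<^esub> i)"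
        using z y by (simp add: T.m_assoc[symmetric] yc)
      then show ?thesis using z y by (simp add: T.m_assoc)
    qed
    also have "\<dots> = z [^]\<^bsub>T\<^esub> (\<Sum>j<Suc i. j) \<otimes>\<^bsub>T\<^esub> y [^]\<^bsub>T\<^esub> Suc i"
      using z y by (simp add: T.nat_pow_mult T.nat_pow_Suc2[symmetric] add.commute del: T.nat_pow_Suc)
    finally show ?case .
  qed
  have gauss: "2 * (\<Sum>j<i. j) = i * (i - 1)" for i :: nat
  proof (induction i)
    case (Suc i) then show ?case by (cases i) (auto simp: algebra_simps)
  qed simp
  obtain r where r: "m = 2 * r + 1" using m oddE by blast
  have "(\<Sum>j<m. j) = m * r" using gauss[of m] r by simp
  then have "z [^]\<^bsub>T\<^esub> (\<Sum>j<m. j) = \<one>\<^bsub>T\<^esub>"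
  proof -
    have "z [^]\<^bsub>T\<^esub> m = \<one>\<^bsub>T\<^esub>" using S1[of m] xm t_one[OF k] by simp
    then show ?thesis using \<open>(\<Sum>j<m. j) = m * r\<close> z by (simp add: T.nat_pow_pow[symmetric])
  qed
  then show ?thesis using S3[of m] xm t_one[OF g] y_def y by simp
qed

end



definition cm :: "('a, 'b) monoid_scheme \<Rightarrow> 'a \<Rightarrow> 'a \<Rightarrow> 'a" where
  "cm G a b = a \<otimes>\<^bsub>G\<^esub> b \<otimes>\<^bsub>G\<^esub> inv\<^bsub>G\<^esub> a \<otimes>\<^bsub>G\<^esub> inv\<^bsub>G\<^esub> b"

fun zc :: "('a, 'b) monoid_scheme \<Rightarrow> nat \<Rightarrow> 'a set" where
  "zc G 0 = {\<one>\<^bsub>G\<^esub>}"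
| "zc G (Suc k) = {z \<in> carrier G. \<forall>g \<in> carrier G. cm G z g \<in> zc G k}"

context group begin

lemma cm_closed [simp]: "a \<in> carrier G \<Longrightarrow> b \<in> carrier G \<Longrightarrow> cm G a b \<in> carrier G"
  by (simp add: cm_def)

lemma cm_one [simp]: "a \<in> carrier G \<Longrightarrow> cm G \<one> a = \<one>"
  by (simp add: cm_def)

lemma cm_inv_swap: "a \<in> carrier G \<Longrightarrow> b \<in> carrier G \<Longrightarrow> inv (cm G a b) = cm G b a"
  by (simp add: cm_def m_assoc inv_mult_group)

lemma cm_mult: "a \<in> carrier G \<Longrightarrow> b \<in> carrier G \<Longrightarrow> g \<in> carrier G \<Longrightarrow>
    cm G (a \<otimes> b) g = conjg G a (cm G b g) \<otimes> cm G a g"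
  by (simp add: cm_def conjg_def m_assoc inv_mult_group)

lemma cm_inv: "a \<in> carrier G \<Longrightarrow> g \<in> carrier G \<Longrightarrow>
    cm G (inv a) g = conjg G (inv a) (inv (cm G a g))"
  by (simp add: cm_def conjg_def m_assoc inv_mult_group)

lemma cm_conj: "a \<in> carrier G \<Longrightarrow> h \<in> carrier G \<Longrightarrow> g \<in> carrier G \<Longrightarrow>
    cm G (conjg G h a) g = conjg G h (cm G a (inv h \<otimes> g \<otimes> h))"
  by (simp add: cm_def conjg_def m_assoc inv_mult_group)

lemma hall_witt: "x \<in> carrier G \<Longrightarrow> y \<in> carrier G \<Longrightarrow> z \<in> carrier G \<Longrightarrow>
   conjg G (inv y) (cm G (cm G y (inv x)) (inv z)) \<otimes> conjg G (inv z) (cm G (cm G z (inv y)) (inv x))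
   \<otimes> conjg G (inv x) (cm G (cm G x (inv z)) (inv y)) = \<one>"
  by (simp add: cm_def conjg_def m_assoc inv_mult_group)

definition nsg :: "'a set \<Rightarrow> bool" where
  "nsg S \<longleftrightarrow> S \<subseteq> carrier G \<and> \<one> \<in> S \<and> (\<forall>a\<in>S. \<forall>b\<in>S. a \<otimes> b \<in> S) \<and> (\<forall>a\<in>S. inv a \<in> S)
     \<and> (\<forall>a\<in>S. \<forall>h\<in>carrier G. conjg G h a \<in> S)"

lemma zc_nsg: "nsg (zc G k)"
proof (induction k)
  case 0
  then show ?case by (auto simp: nsg_def conjg_def)
next
  case (Suc k)
  then have N: "zc G k \<subseteq> carrier G" "\<one> \<in> zc G k" "\<And>a b. a \<in> zc G k \<Longrightarrow> b \<in> zc G k \<Longrightarrow> a \<otimes> b \<in> zc G k"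
    "\<And>a. a \<in> zc G k \<Longrightarrow> inv a \<in> zc G k" "\<And>a h. a \<in> zc G k \<Longrightarrow> h \<in> carrier G \<Longrightarrow> conjg G h a \<in> zc G k"
    by (auto simp: nsg_def)
  show ?case unfolding nsg_def
  proof (intro conjI ballI)
    show "zc G (Suc k) \<subseteq> carrier G" by auto
    show "\<one> \<in> zc G (Suc k)" using N by auto
    show "a \<otimes> b \<in> zc G (Suc k)" if "a \<in> zc G (Suc k)" "b \<in> zc G (Suc k)" for a b
      using that N by (auto simp: cm_mult)
    show "inv a \<in> zc G (Suc k)" if "a \<in> zc G (Suc k)" for a
      using that N by (auto simp: cm_inv)
    show "conjg G h a \<in> zc G (Suc k)" if "a \<in> zc G (Suc k)" "h \<in> carrier G" for a h
      using that N by (auto simp: cm_conj)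
  qed
qed

lemma zc_carrier: "zc G k \<subseteq> carrier G" using zc_nsg by (simp add: nsg_def)
lemma zc_one: "\<one> \<in> zc G k" using zc_nsg by (simp add: nsg_def)
lemma zc_mult: "a \<in> zc G k \<Longrightarrow> b \<in> zc G k \<Longrightarrow> a \<otimes> b \<in> zc G k" using zc_nsg by (simp add: nsg_def)
lemma zc_inv: "a \<in> zc G k \<Longrightarrow> inv a \<in> zc G k" using zc_nsg by (simp add: nsg_def)
lemma zc_conj: "a \<in> zc G k \<Longrightarrow> h \<in> carrier G \<Longrightarrow> conjg G h a \<in> zc G k" using zc_nsg by (simp add: nsg_def)

lemma zc_Suc_mono: "zc G k \<subseteq> zc G (Suc k)"
proof (induction k)
  case 0 then show ?case by auto
next
  case (Suc k) then show ?case by auto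
qed

lemma zc_mono: "k \<le> l \<Longrightarrow> zc G k \<subseteq> zc G l"
  by (induction l rule: dec_induct) (use zc_Suc_mono in auto)

lemma lc_subgroup_Suc: "subgroup (lower_central G (Suc i)) G"
proof (induction i)
  case 0 then show ?case by (simp add: subgroup_self)
next
  case (Suc i)
  have "(\<Union>h \<in> lower_central G (Suc i). \<Union>k \<in> carrier G. {h \<otimes> k \<otimes> inv h \<otimes> inv k}) \<subseteq> carrier G"
    using subgroup.subset[OF Suc] by auto
  then show ?case by (simp add: commutator_subgroup_def generate_is_subgroup)
qed

lemma lc_subgroup: "subgroup (lower_central G i) G"
  using lc_subgroup_Suc by (cases i) (auto intro: subgroup_self)

lemma lc_carrier: "x \<in> lower_central G i \<Longrightarrow> x \<in> carrier G"
  using subgroup.subset[OF lc_subgroup] by blast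

lemma lc_cm: "a \<in> lower_central G (Suc i) \<Longrightarrow> g \<in> carrier G \<Longrightarrow> cm G a g \<in> lower_central G (Suc (Suc i))"
  unfolding lower_central.simps commutator_subgroup_def cm_def by (rule generate.incl) blast

lemma lc_in_zc:
  assumes top: "lower_central G (Suc c) = {\<one>}"
  shows "k \<le> c \<Longrightarrow> lower_central G (Suc (c - k)) \<subseteq> zc G k"
proof (induction k)
  case 0 then show ?case using top by simp
next
  case (Suc k)
  then have IH: "lower_central G (Suc (c - k)) \<subseteq> zc G k" by simp
  obtain j where j: "c - k = Suc j" "c - Suc k = j" using Suc.prems by (metis Suc_diff_Suc diff_Suc_1 le_eq_less_or_eq Suc_le_lessD)
  show ?case
  proof
    fix x assume x: "x \<in> lower_central G (Suc (c - Suc k))"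
    then have "x \<in> lower_central G (Suc j)" using j by simp
    then have "cm G x g \<in> zc G k" if "g \<in> carrier G" for g
      using lc_cm[OF _ that] IH j by auto
    then show "x \<in> zc G (Suc k)" using lc_carrier[OF x] by simp
  qed
qed

lemma P3:
  "a \<in> lower_central G (Suc i) \<Longrightarrow> z \<in> zc G (j + Suc i) \<Longrightarrow> cm G a z \<in> zc G j"
proof (induction i arbitrary: j a z)
  case 0
  then have "cm G z a \<in> zc G j" by simp
  then have "inv (cm G z a) \<in> zc G j" by (rule zc_inv)
  then show ?case using 0 zc_carrier by (simp add: cm_inv_swap subsetD)
next
  case (Suc i)
  define S where "S = {a \<in> carrier G. \<forall>z \<in> zc G (j + Suc (Suc i)). cm G a z \<in> zc G j}"
  have sub: "subgroup S G"
  proof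
    show "S \<subseteq> carrier G" by (auto simp: S_def)
    show "\<one> \<in> S" using zc_carrier zc_one by (auto simp: S_def subsetD)
    show "a \<otimes> b \<in> S" if "a \<in> S" "b \<in> S" for a b
      using that zc_carrier by (auto simp: S_def cm_mult subsetD intro!: zc_mult zc_conj)
    show "inv a \<in> S" if "a \<in> S" for a
      using that zc_carrier by (auto simp: S_def cm_inv subsetD intro!: zc_inv zc_conj)
  qed
  have gens: "cm G a g \<in> S" if a: "a \<in> lower_central G (Suc i)" and g: "g \<in> carrier G" for a g
  proof -
    have ac: "a \<in> carrier G" using lc_carrier[OF a] .
    have "cm G (cm G a g) z \<in> zc G j" if z: "z \<in> zc G (j + Suc (Suc i))" for z
    proof -
      have zc: "z \<in> carrier G" using z zc_carrier by blast
      have ai: "inv a \<in> lower_central G (Suc i)" using a subgroup.m_inv_closed[OF lc_subgroup] by blast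
      have zi: "inv z \<in> zc G ((j + 1) + Suc i)" using zc_inv[OF z] by simp
      have t2a: "cm G (inv a) (inv z) \<in> zc G (Suc j)" using Suc.IH[OF ai zi] by simp
      then have "cm G (inv z) (inv a) \<in> zc G (Suc j)"
        using zc_inv[OF t2a] ac zc by (simp add: cm_inv_swap)
      then have T2: "conjg G z (cm G (cm G (inv z) (inv a)) g) \<in> zc G j"
        using g zc by (auto intro: zc_conj)
      have "cm G z (inv g) \<in> zc G (j + Suc i)" using z g by simp
      then have "cm G (inv g) z \<in> zc G (j + Suc i)"
        using zc_inv g zc by (metis cm_inv_swap inv_closed)
      then have "cm G (inv a) (cm G (inv g) z) \<in> zc G j" using Suc.IH[OF ai] by blast
      then have "cm G (cm G (inv g) z) (inv a) \<in> zc G j"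
        using zc_inv ac g zc by (metis cm_inv_swap inv_closed cm_closed)
      then have T3: "conjg G g (cm G (cm G (inv g) z) (inv a)) \<in> zc G j"
        using g by (auto intro: zc_conj)
      have HW: "conjg G (inv a) (cm G (cm G a g) z) \<otimes> conjg G z (cm G (cm G (inv z) (inv a)) g)
         \<otimes> conjg G g (cm G (cm G (inv g) z) (inv a)) = \<one>"
        using hall_witt[of "inv g" a "inv z"] ac g zc by simp
      define T1 where "T1 = conjg G (inv a) (cm G (cm G a g) z)"
      have T1c: "T1 \<in> carrier G" using ac g zc by (simp add: T1_def)
      have "T1 = inv (conjg G z (cm G (cm G (inv z) (inv a)) g) \<otimes> conjg G g (cm G (cm G (inv g) z) (inv a)))"
        using HW T1c ac g zc unfolding T1_def[symmetric]
        by (metis cm_closed conjg_closed' inv_closed inv_equality m_assoc m_closed)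
      then have "T1 \<in> zc G j" using T2 T3 by (auto intro: zc_inv zc_mult)
      then have "conjg G a T1 \<in> zc G j" using ac by (auto intro: zc_conj)
      moreover have "conjg G a T1 = cm G (cm G a g) z"
        using ac g zc by (simp add: T1_def conjg_def m_assoc)
      ultimately show ?thesis by simp
    qed
    then show ?thesis using ac g by (simp add: S_def)
  qed
  have "lower_central G (Suc (Suc i)) \<subseteq> S"
    unfolding lower_central.simps commutator_subgroup_def
    by (rule generate_subgroup_incl[OF _ sub]) (use gens in \<open>auto simp: cm_def\<close>)
  then show ?case using Suc.prems by (auto simp: S_def)
qed

end



lemma tensor_tpair: assumes gr: "group G" shows "tpair G (tensor_square G) (tensor G)"
proof -
  interpret G: group G by (rule gr)
  have Tg: "group (tensor_square G)" by (rule tensor_square_group[OF gr])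
  have cl: "tensor G a b \<in> carrier (tensor_square G)" if "a \<in> carrier G" "b \<in> carrier G" for a b
    using that by (auto simp: tensor_def tensor_square_def twords_def intro!: quotientI)
  have tw: "[((a, b), True)] \<in> twords G" if "a \<in> carrier G" "b \<in> carrier G" for a b
    using that by (simp add: twords_def)
  have mul: "tensor G a b \<otimes>\<^bsub>tensor_square G\<^esub> tensor G c d = teq G `` {[((a, b), True), ((c, d), True)]}"
    if "a \<in> carrier G" "b \<in> carrier G" "c \<in> carrier G" "d \<in> carrier G" for a b c d
    using tmult_class[OF gr tw[of a b] tw[of c d]] that by (simp add: tensor_def)
  have eqc: "teq G `` {u} = teq G `` {v}" if "(u, v) \<in> teq G" for u v
    using equiv_class_eq[OF teq_equiv[OF gr] that] .
  have r1: "tensor G (g \<otimes>\<^bsub>G\<^esub> g') h = tensor G (conjg G g g') (conjg G g h) \<otimes>\<^bsub>tensor_square G\<^esub> tensor G g h"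
      if "g \<in> carrier G" "g' \<in> carrier G" "h \<in> carrier G" for g g' h
    using mul[of "conjg G g g'" "conjg G g h" g h] eqc[OF teq_rel1[OF that]] that by (simp add: tensor_def)
  have r2: "tensor G g (h \<otimes>\<^bsub>G\<^esub> h') = tensor G g h \<otimes>\<^bsub>tensor_square G\<^esub> tensor G (conjg G h g) (conjg G h h')"
      if "g \<in> carrier G" "h \<in> carrier G" "h' \<in> carrier G" for g h h'
    using mul[of g h "conjg G h g" "conjg G h h'"] eqc[OF teq_rel2[OF that]] that by (simp add: tensor_def)
  show ?thesis
    unfolding tpair_def tpair_axioms_def using gr Tg cl r1 r2 by blast
qed

theorem lemma5p2:
  fixes G :: "('a, 'b) monoid_scheme"
  assumes "group G"
    and "finite (carrier G)"
    and "odd (order G)"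
    and "nilpotent G"
    and "c = nilpotency_class G"
    and "n = (c + 1) div 2"
    and "x \<in> lower_central G n"
    and "g \<in> carrier G"
  shows "group.ord (tensor_square G) (tensor G x g) dvd exponent_of G (lower_central G n)"
proof -
  interpret G: group G by (rule assms(1))
  interpret tp: tpair G "tensor_square G" "tensor G" by (rule tensor_tpair[OF assms(1)])
  have top: "lower_central G (Suc c) = {\<one>\<^bsub>G\<^esub>}"
  proof -
    obtain c0 where "lower_central G (Suc c0) = {\<one>\<^bsub>G\<^esub>}" using assms(4) unfolding nilpotent_def by blast
    then show ?thesis unfolding assms(5) nilpotency_class_def by (rule LeastI)
  qed
  have xc: "x \<in> carrier G" using G.lc_carrier[OF assms(7)] .
  have g: "g \<in> carrier G" by fact
  define k where "k = x \<otimes>\<^bsub>G\<^esub> g \<otimes>\<^bsub>G\<^esub> inv\<^bsub>G\<^esub> x \<otimes>\<^bsub>G\<^esub> inv\<^bsub>G\<^esub> g"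
  have kc: "k \<in> carrier G" using xc g by (simp add: k_def)
  have comm: "x \<otimes>\<^bsub>G\<^esub> k = k \<otimes>\<^bsub>G\<^esub> x"
  proof (cases n)
    case 0
    then have "c = 0" using assms(6) by simp
    then have "carrier G = {\<one>\<^bsub>G\<^esub>}" using top by simp
    then show ?thesis using xc kc by simp
  next
    case (Suc i)
    have k1: "k \<in> lower_central G (Suc (Suc i))"
      using G.lc_cm[of x i g] assms(7) Suc g by (simp add: k_def cm_def)
    have "n \<le> c" "c - n \<le> n" using assms(6) Suc by auto
    then have "lower_central G (Suc (c - (c - n))) \<subseteq> zc G (c - n)"
      using G.lc_in_zc[OF top, of "c - n"] by simp
    also have "\<dots> \<subseteq> zc G (0 + Suc i)" using G.zc_mono[of "c - n" "Suc i"] \<open>c - n \<le> n\<close> Suc by (simp del: zc.simps)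
    finally have "k \<in> zc G (0 + Suc i)" using k1 \<open>n \<le> c\<close> Suc by auto
    then have "cm G x k \<in> zc G 0" using G.P3[of x i k 0] assms(7) Suc by simp
    then have "x \<otimes>\<^bsub>G\<^esub> k \<otimes>\<^bsub>G\<^esub> inv\<^bsub>G\<^esub> x \<otimes>\<^bsub>G\<^esub> inv\<^bsub>G\<^esub> k = \<one>\<^bsub>G\<^esub>" by (simp add: cm_def)
    moreover have "x \<otimes>\<^bsub>G\<^esub> k = (x \<otimes>\<^bsub>G\<^esub> k \<otimes>\<^bsub>G\<^esub> inv\<^bsub>G\<^esub> x \<otimes>\<^bsub>G\<^esub> inv\<^bsub>G\<^esub> k) \<otimes>\<^bsub>G\<^esub> k \<otimes>\<^bsub>G\<^esub> x"
      using xc kc by (simp add: G.m_assoc)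
    ultimately show ?thesis using xc kc by simp
  qed
  define m where "m = G.ord x"
  have xm: "x [^]\<^bsub>G\<^esub> m = \<one>\<^bsub>G\<^esub>" using xc by (simp add: m_def)
  have "m dvd order G" using G.ord_dvd_group_order[OF xc] by (simp add: m_def)
  then have om: "odd m" using assms(3) dvd_trans by blast
  have "tensor G x g [^]\<^bsub>tensor_square G\<^esub> m = \<one>\<^bsub>tensor_square G\<^esub>"
    using tp.main_T[OF xc g _ xm om] comm by (simp add: k_def)
  then have "group.ord (tensor_square G) (tensor G x g) dvd m"
    using tp.T.pow_eq_id xc g by simp
  moreover have "m dvd exponent_of G (lower_central G n)"
    unfolding exponent_of_def m_def using assms(7) by (simp add: dvd_Lcm)
  ultimately show ?thesis by (rule dvd_trans)
qed


end
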